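(* Let $w\in S_n$ and $1\le i<j<k<\ell\le n$ with $w_\ell<w_j<w_k<w_i$. Define $\tau\in S_n$ by $\tau_m=w_m$ for $m\notin\{j,k\}$, $\tau_j=w_k$, $\tau_k=w_j$. Let $x\in\mathfrak{sl}_n(\mathbb C)$ and let $H\subseteq\mathfrak{sl}_n(\mathbb C)$ be a Hessenberg space. If the Schubert cell $C_{w^{-1}}$ is contained in the adjoint Hessenberg variety $\mathcal B(x,H)$, then $\dot\tau^{-1}B\in\mathcal B(x,H)$.
   Context: $G=SL_n(\mathbb C)$, $B$ the upper triangular matrices in $G$, $\mathfrak b$ its Lie algebra. Permutations are written in one-line notation $w=[w_1\cdots w_n]$ with $w_i=w(i)$; $\dot w$ denotes a scalar multiple of the permutation matrix sending $e_i\mapsto e_{w(i)}$ lying in $G$. $C_w=B\dot wB/B\subseteq G/B$. A Hessenberg space is a subspace $H\subseteq\mathfrak{sl}_n(\mathbb C)$ with $[\mathfrak b,H]\subseteq H$; for $x\in\mathfrak{sl}_n(\mathbb C)$, $\mathcal B(x,H)=\{gB\in G/B: g^{-1}xg\in H\}$. *)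

theory Defs
  imports "Jordan_Normal_Form.Determinant" "HOL-Combinatorics.Permutations"
begin

text \<open>Matrices are n x n complex matrices with 0-based indices 0..n-1.\<close>

definition mtrace :: "complex mat \<Rightarrow> complex" where
  "mtrace A = (\<Sum>i<dim_row A. A $$ (i,i))"

definition SL :: "nat \<Rightarrow> complex mat set" where
  "SL n = {g \<in> carrier_mat n n. det g = 1}"

definition Bor :: "nat \<Rightarrow> complex mat set" where
  "Bor n = {b \<in> SL n. upper_triangular b}"

definition sl :: "nat \<Rightarrow> complex mat set" where
  "sl n = {X \<in> carrier_mat n n. mtrace X = 0}"

definition b_lie :: "nat \<Rightarrow> complex mat set" where
  "b_lie n = {X \<in> sl n. upper_triangular X}"

definition perm_mat :: "nat \<Rightarrow> (nat \<Rightarrow> nat) \<Rightarrow> complex mat" where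
  "perm_mat n w = mat n n (\<lambda>(r,c). if r = w c then 1 else 0)"

text \<open>All admissible lifts w-dot: scalar multiples of the permutation matrix lying in SL_n.\<close>
definition dots :: "nat \<Rightarrow> (nat \<Rightarrow> nat) \<Rightarrow> complex mat set" where
  "dots n w = {d \<in> SL n. \<exists>c. d = c \<cdot>\<^sub>m perm_mat n w}"

text \<open>The coset gB, a point of G/B.\<close>
definition coset :: "nat \<Rightarrow> complex mat \<Rightarrow> complex mat set" where
  "coset n g = {g * b | b. b \<in> Bor n}"

definition schubert_cell :: "nat \<Rightarrow> (nat \<Rightarrow> nat) \<Rightarrow> complex mat set set" where
  "schubert_cell n w = {coset n (b * d) | b d. b \<in> Bor n \<and> d \<in> dots n w}"

definition hessenberg_space :: "nat \<Rightarrow> complex mat set \<Rightarrow> bool" where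
  "hessenberg_space n H \<longleftrightarrow> H \<subseteq> sl n \<and> 0\<^sub>m n n \<in> H
     \<and> (\<forall>X\<in>H. \<forall>Y\<in>H. X + Y \<in> H) \<and> (\<forall>c. \<forall>X\<in>H. c \<cdot>\<^sub>m X \<in> H)
     \<and> (\<forall>X\<in>b_lie n. \<forall>Y\<in>H. X * Y - Y * X \<in> H)"

definition hess_var :: "nat \<Rightarrow> complex mat \<Rightarrow> complex mat set \<Rightarrow> complex mat set set" where
  "hess_var n x H = {coset n g | g. g \<in> SL n \<and>
      (\<exists>gi \<in> carrier_mat n n. gi * g = 1\<^sub>m n \<and> gi * x * g \<in> H)}"

end

theory Submission
  imports Defs
begin


definition E :: "nat \<Rightarrow> nat \<Rightarrow> nat \<Rightarrow> complex mat" where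
  "E n a b = mat n n (\<lambda>(r,s). if r = a \<and> s = b then 1 else 0)"

lemma E_carrier[simp]: "E n a b \<in> carrier_mat n n" by (simp add: E_def)
lemma E_dim[simp]: "dim_row (E n a b) = n" "dim_col (E n a b) = n" by (simp_all add: E_def)
lemma E_index[simp]: "r < n \<Longrightarrow> s < n \<Longrightarrow> E n a b $$ (r,s) = (if r = a \<and> s = b then 1 else 0)"
  by (simp add: E_def)

lemma mult_index:
  assumes "A \<in> carrier_mat n n" "B \<in> carrier_mat n n" "r < n" "s < n"
  shows "(A * B) $$ (r,s) = (\<Sum>m<n. A $$ (r,m) * B $$ (m,s))"
  using assms by (simp add: scalar_prod_def lessThan_atLeast0)

lemma sum_delta_l: "b < (n::nat) \<Longrightarrow> (\<Sum>m<n. (if m = b then 1 else 0) * (f m::complex)) = f b"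
proof -
  assume "b < n"
  have "(\<Sum>m<n. (if m = b then 1 else 0) * (f m::complex)) = (\<Sum>m<n. if m = b then f m else 0)"
    by (rule sum.cong) auto
  then show ?thesis using \<open>b < n\<close> by (simp add: sum.delta)
qed

lemma sum_delta_r: "b < (n::nat) \<Longrightarrow> (\<Sum>m<n. (f m::complex) * (if m = b then 1 else 0)) = f b"
  using sum_delta_l[of b n f] by (simp add: mult.commute)

lemma E_mult_left:
  assumes "Y \<in> carrier_mat n n" "b < n" "r < n" "s < n"
  shows "(E n a b * Y) $$ (r,s) = (if r = a then Y $$ (b,s) else 0)"
  using assms by (subst mult_index[of _ n]) (auto simp: sum_delta_l)

lemma E_mult_right:
  assumes "Y \<in> carrier_mat n n" "a < n" "r < n" "s < n"
  shows "(Y * E n a b) $$ (r,s) = (if s = b then Y $$ (r,a) else 0)"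
  using assms by (subst mult_index[of _ n]) (auto simp: sum_delta_r)

lemma E_mult_E:
  assumes "b < n"
  shows "E n a b * E n c d = (if b = c then E n a d else 0\<^sub>m n n)"
  by (rule eq_matI) (use assms in \<open>auto simp del: index_mult_mat(1) simp: E_mult_left\<close>)

lemma E_in_b_lie: "a < b \<Longrightarrow> b < n \<Longrightarrow> E n a b \<in> b_lie n"
  unfolding b_lie_def sl_def mtrace_def upper_triangular_def
  by (auto intro!: sum.neutral)

definition hd :: "nat \<Rightarrow> nat \<Rightarrow> nat \<Rightarrow> complex mat" where
  "hd n a b = E n a a - E n b b"

lemma hd_carrier[simp]: "hd n a b \<in> carrier_mat n n" unfolding hd_def by (rule minus_carrier_mat) simp
lemma EE_carrier[simp]: "E n a a - E n b b \<in> carrier_mat n n" by (rule minus_carrier_mat) simp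
lemma hd_dim[simp]: "dim_row (hd n a b) = n" "dim_col (hd n a b) = n" by (simp_all add: hd_def)
lemma hd_index[simp]: "r < n \<Longrightarrow> s < n \<Longrightarrow> hd n a b $$ (r,s) = (if r = s then (if r = a then 1 else 0) - (if r = b then 1 else 0) else 0)"
  by (auto simp add: hd_def)

lemma hd_in_b_lie: assumes "a \<noteq> b" "a < n" "b < n" shows "hd n a b \<in> b_lie n"
proof -
  have "(\<Sum>i<n. hd n a b $$ (i,i)) = (\<Sum>i<n. (if i = a then 1 else 0) - (if i = b then 1 else 0))"
    by (rule sum.cong, auto simp: hd_def)
  also have "\<dots> = 0" using assms by (simp add: sum_subtractf sum.delta)
  finally show ?thesis unfolding b_lie_def sl_def mtrace_def upper_triangular_def
    by (auto simp: hd_def)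
qed

fun msum :: "nat \<Rightarrow> ('i \<Rightarrow> complex mat) \<Rightarrow> 'i list \<Rightarrow> complex mat" where
  "msum n f [] = 0\<^sub>m n n"
| "msum n f (i # is) = f i + msum n f is"

lemma msum_carrier: "(\<And>i. i \<in> set is \<Longrightarrow> f i \<in> carrier_mat n n) \<Longrightarrow> msum n f is \<in> carrier_mat n n"
  by (induction "is") auto

lemma msum_index: "(\<And>i. i \<in> set is \<Longrightarrow> f i \<in> carrier_mat n n) \<Longrightarrow> r < n \<Longrightarrow> s < n \<Longrightarrow>
   msum n f is $$ (r,s) = (\<Sum>i\<leftarrow>is. f i $$ (r,s))"
proof (induction "is")
  case Nil then show ?case by simp
next
  case (Cons i "is")
  have c: "msum n f is \<in> carrier_mat n n" using Cons by (intro msum_carrier) auto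
  then show ?case using Cons by simp
qed

locale hess =
  fixes n :: nat and H :: "complex mat set"
  assumes hs: "hessenberg_space n H"
begin

lemma H_carrier: "Z \<in> H \<Longrightarrow> Z \<in> carrier_mat n n"
  using hs unfolding hessenberg_space_def sl_def by auto
lemma H_zero: "0\<^sub>m n n \<in> H" using hs unfolding hessenberg_space_def by auto
lemma H_add: "X \<in> H \<Longrightarrow> Y \<in> H \<Longrightarrow> X + Y \<in> H" using hs unfolding hessenberg_space_def by auto
lemma H_smult: "X \<in> H \<Longrightarrow> c \<cdot>\<^sub>m X \<in> H" using hs unfolding hessenberg_space_def by auto
lemma H_br: "X \<in> b_lie n \<Longrightarrow> Y \<in> H \<Longrightarrow> X * Y - Y * X \<in> H" using hs unfolding hessenberg_space_def by auto

lemma H_eq: "X \<in> H \<Longrightarrow> Y = X \<Longrightarrow> Y \<in> H" by simp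

lemma H_msum: "(\<And>i. i \<in> set is \<Longrightarrow> f i \<in> H) \<Longrightarrow> msum n f is \<in> H"
  by (induction "is") (auto intro: H_add H_zero)

lemma H_lincomb:
  assumes "X \<in> H" "Y \<in> H" "Z = a \<cdot>\<^sub>m X + b \<cdot>\<^sub>m Y"
  shows "Z \<in> H" using assms H_add H_smult by auto

lemma H_scale_back:
  assumes "c \<cdot>\<^sub>m X \<in> H" "c \<noteq> 0" "X \<in> carrier_mat n n"
  shows "X \<in> H"
proof -
  have "(1/c) \<cdot>\<^sub>m (c \<cdot>\<^sub>m X) = X" using assms by (auto intro!: eq_matI)
  then show ?thesis using H_smult[OF assms(1), of "1/c"] by simp
qed

end


context hess begin

lemma colmove:
  assumes "E n a b \<in> H" "b < b'" "b' < n" "a \<noteq> b'" "a < n"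
  shows "E n a b' \<in> H"
proof -
  have K: "E n b b' * E n a b - E n a b * E n b b' \<in> H"
    using H_br[OF E_in_b_lie[OF assms(2,3)] assms(1)] .
  have "E n a b' = (-1) \<cdot>\<^sub>m (E n b b' * E n a b - E n a b * E n b b')"
    using assms by (intro eq_matI) (auto simp: E_mult_E)
  then show ?thesis using H_smult[OF K] by simp
qed

lemma rowmove:
  assumes "E n a b \<in> H" "a' < a" "a < n" "a' \<noteq> b" "b < n"
  shows "E n a' b \<in> H"
proof -
  have K: "E n a' a * E n a b - E n a b * E n a' a \<in> H"
    using H_br[OF E_in_b_lie[OF assms(2,3)] assms(1)] .
  have "E n a' b = (E n a' a * E n a b - E n a b * E n a' a)"
    using assms by (intro eq_matI) (auto simp: E_mult_E)
  then show ?thesis using K by simp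
qed

lemma hd_in_H:
  assumes "E n a b \<in> H" "b < a" "a < n"
  shows "hd n b a \<in> H"
proof -
  have K: "E n b a * E n a b - E n a b * E n b a \<in> H"
    using H_br[OF E_in_b_lie[OF assms(2,3)] assms(1)] .
  have "hd n b a = E n b a * E n a b - E n a b * E n b a"
    using assms by (intro eq_matI) (auto simp: E_mult_E hd_def)
  then show ?thesis using K by simp
qed

lemma flip:
  assumes "E n a b \<in> H" "b < a" "a < n"
  shows "E n b a \<in> H"
proof -
  have K: "hd n b a \<in> H" using hd_in_H[OF assms] .
  have K2: "E n b a * hd n b a - hd n b a * E n b a \<in> H"
    using H_br[OF E_in_b_lie[OF assms(2,3)] K] .
  have hc: "hd n b a \<in> carrier_mat n n" by (simp add: hd_def)
  have eq: "E n b a = (-1/2) \<cdot>\<^sub>m (E n b a * hd n b a - hd n b a * E n b a)"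
    using assms hc by (intro eq_matI) (auto simp: hd_def mult_minus_distrib_mat[of _ n n _ n] minus_mult_distrib_mat[of _ n n _ _ n] E_mult_E)
  show ?thesis by (subst eq) (rule H_smult[OF K2])
qed

lemma closure:
  assumes "E n a b \<in> H" "a < n" "b < n" "a \<noteq> b" "a' \<le> a" "b \<le> b'" "b' < n" "a' \<noteq> b'"
  shows "E n a' b' \<in> H"
proof (cases "a' \<noteq> b")
  case True
  have 1: "E n a' b \<in> H"
  proof (cases "a' = a")
    case False then show ?thesis using rowmove[OF assms(1)] assms True by auto
  qed (use assms in auto)
  show ?thesis
  proof (cases "b = b'")
    case False then show ?thesis using colmove[OF 1] assms by auto
  qed (use 1 in auto)
next
  case False
  then have ab: "a' = b" by simp
  show ?thesis
  proof (cases "a = b'")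
    case False
    have 1: "E n a b' \<in> H"
    proof (cases "b = b'")
      case False then show ?thesis using colmove[OF assms(1)] assms \<open>a \<noteq> b'\<close> by auto
    qed (use assms in auto)
    show ?thesis
    proof (cases "a = a'")
      case False then show ?thesis using rowmove[OF 1] assms by auto
    qed (use 1 in auto)
  next
    case True
    then show ?thesis using flip[OF assms(1)] assms ab by auto
  qed
qed

definition adh :: "nat \<Rightarrow> nat \<Rightarrow> complex mat \<Rightarrow> complex mat" where
  "adh a b Y = hd n a b * Y - Y * hd n a b"

lemma adh_index:
  assumes "Y \<in> carrier_mat n n" "r < n" "s < n" "a < n" "b < n"
  shows "adh a b Y $$ (r,s) = (((if r = a then 1 else 0) - (if r = b then 1 else 0))
        - ((if s = a then 1 else 0) - (if s = b then 1 else 0))) * Y $$ (r,s)"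
proof -
  define c :: "nat \<Rightarrow> complex" where "c r = (if r = a then 1 else 0) - (if r = b then 1 else 0)" for r
  have "(hd n a b * Y) $$ (r,s) = (\<Sum>m<n. hd n a b $$ (r,m) * Y $$ (m,s))"
    using assms by (subst mult_index[of _ n]) auto
  also have "\<dots> = (\<Sum>m<n. if m = r then c r * Y $$ (r,s) else 0)"
    using assms by (intro sum.cong) (auto simp: c_def)
  finally have 1: "(hd n a b * Y) $$ (r,s) = c r * Y $$ (r,s)" using assms by simp
  have "(Y * hd n a b) $$ (r,s) = (\<Sum>m<n. Y $$ (r,m) * hd n a b $$ (m,s))"
    using assms by (subst mult_index[of _ n]) auto
  also have "\<dots> = (\<Sum>m<n. if m = s then c s * Y $$ (r,s) else 0)"
    using assms by (intro sum.cong) (auto simp: c_def)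
  finally have 2: "(Y * hd n a b) $$ (r,s) = c s * Y $$ (r,s)" using assms by simp
  have 3: "adh a b Y $$ (r,s) = (hd n a b * Y) $$ (r,s) - (Y * hd n a b) $$ (r,s)"
    using assms unfolding adh_def by (simp del: index_mult_mat(1))
  have 4: "adh a b Y $$ (r,s) = c r * Y $$ (r,s) - c s * Y $$ (r,s)"
    unfolding 3 1 2 ..
  show ?thesis unfolding 4 c_def by (simp only: left_diff_distrib)
qed

lemma adh_carrier: "Y \<in> carrier_mat n n \<Longrightarrow> adh a b Y \<in> carrier_mat n n"
  unfolding adh_def by (intro minus_carrier_mat mult_carrier_mat) auto

lemma adh_H: "Y \<in> H \<Longrightarrow> a \<noteq> b \<Longrightarrow> a < n \<Longrightarrow> b < n \<Longrightarrow> adh a b Y \<in> H"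
  unfolding adh_def by (rule H_br[OF hd_in_b_lie])

end

context hess begin
lemma CL:
  assumes "Z \<in> H" "a \<noteq> b" "a < n" "b < n" "Z $$ (a,b) \<noteq> 0"
  shows "E n a b \<in> H"
proof -
  have Zc: "Z \<in> carrier_mat n n" using H_carrier assms by auto
  define Z1 where "Z1 = adh a b Z"
  define Z2 where "Z2 = adh a b Z1"
  define Z3 where "Z3 = adh a b Z2"
  define Z4 where "Z4 = adh a b Z3"
  have H1: "Z1 \<in> H" "Z2 \<in> H" "Z3 \<in> H" "Z4 \<in> H"
    unfolding Z1_def Z2_def Z3_def Z4_def using assms by (auto intro!: adh_H)
  have C1: "Z1 \<in> carrier_mat n n" "Z2 \<in> carrier_mat n n" "Z3 \<in> carrier_mat n n" "Z4 \<in> carrier_mat n n"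
    unfolding Z1_def Z2_def Z3_def Z4_def using Zc by (auto intro!: adh_carrier)
  define d :: "nat \<Rightarrow> nat \<Rightarrow> complex" where "d r s = (((if r = a then 1 else 0) - (if r = b then 1 else 0))
        - ((if s = a then 1 else 0) - (if s = b then 1 else 0)))" for r s
  have I: "Z1 $$ (r,s) = d r s * Z $$ (r,s)" "Z2 $$ (r,s) = d r s ^ 2 * Z $$ (r,s)"
      "Z3 $$ (r,s) = d r s ^ 3 * Z $$ (r,s)" "Z4 $$ (r,s) = d r s ^ 4 * Z $$ (r,s)"
    if "r < n" "s < n" for r s
    using that assms Zc C1 unfolding Z1_def Z2_def Z3_def Z4_def d_def[symmetric]
    by (simp_all add: adh_index d_def power2_eq_square power3_eq_cube power4_eq_xxxx) 
  define Q where "Q = Z4 + (2::complex) \<cdot>\<^sub>m Z3 + ((-1::complex) \<cdot>\<^sub>m Z2 + (-2::complex) \<cdot>\<^sub>m Z1)"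
  have QH: "Q \<in> H" unfolding Q_def using H1 by (intro H_add H_smult) auto
  have "Q = (24 * Z $$ (a,b)) \<cdot>\<^sub>m E n a b"
  proof (rule eq_matI)
    fix r s assume rs: "r < dim_row ((24 * Z $$ (a,b)) \<cdot>\<^sub>m E n a b)" "s < dim_col ((24 * Z $$ (a,b)) \<cdot>\<^sub>m E n a b)"
    then have rs': "r < n" "s < n" by auto
    have "Q $$ (r,s) = (d r s ^ 4 + 2 * d r s ^ 3 - d r s ^ 2 - 2 * d r s) * Z $$ (r,s)"
      unfolding Q_def using rs' C1 I[OF rs'] by (simp add: algebra_simps)
    also have "\<dots> = (24 * Z $$ (a,b)) * (if r = a \<and> s = b then 1 else 0)"
      using assms unfolding d_def by (auto simp: power2_eq_square power3_eq_cube power4_eq_xxxx)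
    finally show "Q $$ (r,s) = ((24 * Z $$ (a,b)) \<cdot>\<^sub>m E n a b) $$ (r,s)" using rs' by simp
  qed (use C1 in \<open>auto simp: Q_def\<close>)
  then show ?thesis using QH H_scale_back[of "24 * Z $$ (a,b)" "E n a b"] assms by auto
qed

end


definition offp :: "nat \<Rightarrow> complex mat \<Rightarrow> complex mat" where
  "offp n Y = mat n n (\<lambda>(r,s). if r = s then 0 else Y $$ (r,s))"
definition dgp :: "nat \<Rightarrow> complex mat \<Rightarrow> complex mat" where
  "dgp n Y = mat n n (\<lambda>(r,s). if r = s then Y $$ (r,s) else 0)"
definition diagm :: "nat \<Rightarrow> (nat \<Rightarrow> complex) \<Rightarrow> complex mat" where
  "diagm n v = mat n n (\<lambda>(r,s). if r = s then v r else 0)"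
definition pairs :: "nat \<Rightarrow> (nat \<times> nat) list" where
  "pairs n = filter (\<lambda>(r,s). r \<noteq> s) (List.product [0..<n] [0..<n])"

lemma offp_carrier[simp]: "offp n Y \<in> carrier_mat n n" by (simp add: offp_def)
lemma dgp_carrier[simp]: "dgp n Y \<in> carrier_mat n n" by (simp add: dgp_def)
lemma diagm_carrier[simp]: "diagm n v \<in> carrier_mat n n" by (simp add: diagm_def)
lemma offp_index[simp]: "r < n \<Longrightarrow> s < n \<Longrightarrow> offp n Y $$ (r,s) = (if r = s then 0 else Y $$ (r,s))"
  by (simp add: offp_def)
lemma dgp_index[simp]: "r < n \<Longrightarrow> s < n \<Longrightarrow> dgp n Y $$ (r,s) = (if r = s then Y $$ (r,s) else 0)"
  by (simp add: dgp_def)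
lemma diagm_index[simp]: "r < n \<Longrightarrow> s < n \<Longrightarrow> diagm n v $$ (r,s) = (if r = s then v r else 0)"
  by (simp add: diagm_def)
lemma offp_dim[simp]: "dim_row (offp n Y) = n" "dim_col (offp n Y) = n" by (simp_all add: offp_def)
lemma dgp_dim[simp]: "dim_row (dgp n Y) = n" "dim_col (dgp n Y) = n" by (simp_all add: dgp_def)
lemma diagm_dim[simp]: "dim_row (diagm n v) = n" "dim_col (diagm n v) = n" by (simp_all add: diagm_def)

lemma pairs_set: "set (pairs n) = {(r,s). r < n \<and> s < n \<and> r \<noteq> s}"
  by (auto simp: pairs_def)
lemma pairs_distinct: "distinct (pairs n)"
  by (simp add: pairs_def distinct_product)

lemma offp_msum:
  assumes "Y \<in> carrier_mat n n"
  shows "offp n Y = msum n (\<lambda>p. Y $$ p \<cdot>\<^sub>m E n (fst p) (snd p)) (pairs n)"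
proof (rule eq_matI)
  have c: "msum n (\<lambda>p. Y $$ p \<cdot>\<^sub>m E n (fst p) (snd p)) (pairs n) \<in> carrier_mat n n"
    by (rule msum_carrier) simp
  then show "dim_row (offp n Y) = dim_row (msum n (\<lambda>p. Y $$ p \<cdot>\<^sub>m E n (fst p) (snd p)) (pairs n))"
    "dim_col (offp n Y) = dim_col (msum n (\<lambda>p. Y $$ p \<cdot>\<^sub>m E n (fst p) (snd p)) (pairs n))" by auto
  fix r s assume rs: "r < dim_row (msum n (\<lambda>p. Y $$ p \<cdot>\<^sub>m E n (fst p) (snd p)) (pairs n))"
    "s < dim_col (msum n (\<lambda>p. Y $$ p \<cdot>\<^sub>m E n (fst p) (snd p)) (pairs n))"
  then have rs': "r < n" "s < n" using c by auto
  have "msum n (\<lambda>p. Y $$ p \<cdot>\<^sub>m E n (fst p) (snd p)) (pairs n) $$ (r,s)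
     = (\<Sum>p\<leftarrow>pairs n. (Y $$ p \<cdot>\<^sub>m E n (fst p) (snd p)) $$ (r,s))"
    using rs' by (intro msum_index) auto
  also have "\<dots> = (\<Sum>p\<in>set (pairs n). (Y $$ p \<cdot>\<^sub>m E n (fst p) (snd p)) $$ (r,s))"
    by (rule sum_list_distinct_conv_sum_set[OF pairs_distinct])
  also have "\<dots> = (\<Sum>p\<in>set (pairs n). if p = (r,s) then Y $$ (r,s) else 0)"
    using rs' by (intro sum.cong) auto
  also have "\<dots> = (if (r,s) \<in> set (pairs n) then Y $$ (r,s) else 0)"
    by (rule sum.delta) simp
  also have "\<dots> = offp n Y $$ (r,s)"
    using rs' by (simp add: pairs_set)
  finally show "offp n Y $$ (r,s) = msum n (\<lambda>p. Y $$ p \<cdot>\<^sub>m E n (fst p) (snd p)) (pairs n) $$ (r,s)"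
    by simp
qed

lemma offp_dgp: "Y \<in> carrier_mat n n \<Longrightarrow> Y = offp n Y + dgp n Y"
  by (rule eq_matI) auto

lemma diagm_msum:
  assumes "n \<ge> 1" "(\<Sum>m<n. v m) = 0"
  shows "diagm n v = msum n (\<lambda>m. (\<Sum>i\<le>m. v i) \<cdot>\<^sub>m hd n m (Suc m)) [0..<n-1]"
proof (rule eq_matI)
  let ?T = "\<lambda>m. (\<Sum>i\<le>m. v i)"
  have c: "msum n (\<lambda>m. ?T m \<cdot>\<^sub>m hd n m (Suc m)) [0..<n-1] \<in> carrier_mat n n"
    by (rule msum_carrier) simp
  then show "dim_row (diagm n v) = dim_row (msum n (\<lambda>m. ?T m \<cdot>\<^sub>m hd n m (Suc m)) [0..<n-1])"
    "dim_col (diagm n v) = dim_col (msum n (\<lambda>m. ?T m \<cdot>\<^sub>m hd n m (Suc m)) [0..<n-1])" by auto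
  fix r s assume rs: "r < dim_row (msum n (\<lambda>m. ?T m \<cdot>\<^sub>m hd n m (Suc m)) [0..<n-1])"
    "s < dim_col (msum n (\<lambda>m. ?T m \<cdot>\<^sub>m hd n m (Suc m)) [0..<n-1])"
  then have rs': "r < n" "s < n" using c by auto
  have "msum n (\<lambda>m. ?T m \<cdot>\<^sub>m hd n m (Suc m)) [0..<n-1] $$ (r,s)
     = (\<Sum>m\<leftarrow>[0..<n-1]. (?T m \<cdot>\<^sub>m hd n m (Suc m)) $$ (r,s))"
    using rs' by (intro msum_index) auto
  also have "\<dots> = (\<Sum>m\<in>{0..<n-1}. (?T m \<cdot>\<^sub>m hd n m (Suc m)) $$ (r,s))"
    by (simp add: interv_sum_list_conv_sum_set_nat)
  also have "\<dots> = (\<Sum>m\<in>{0..<n-1}. if r = s then ((if m = r then ?T m else 0) - (if Suc m = r then ?T m else 0)) else 0)"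
    using rs' by (intro sum.cong) (auto simp: algebra_simps)
  also have "\<dots> = diagm n v $$ (r,s)"
  proof (cases "r = s")
    case False then show ?thesis using rs' by simp
  next
    case True
    have "(\<Sum>m\<in>{0..<n-1}. ((if m = r then ?T m else 0) - (if Suc m = r then ?T m else 0))) = v r"
    proof (cases r)
      case 0
      have "(\<Sum>m\<in>{0..<n-1}. ((if m = r then ?T m else 0) - (if Suc m = r then ?T m else 0)))
          = (\<Sum>m\<in>{0..<n-1}. (if m = 0 then ?T m else 0))"
        using 0 by (intro sum.cong) auto
      also have "\<dots> = v 0"
      proof (cases "n = 1")
        case True
        then show ?thesis using assms(2) by simp
      next
        case False
        then show ?thesis using assms(1) by simp
      qed
      finally show ?thesis using 0 by simp
    next
      case (Suc r')
      have "(\<Sum>m\<in>{0..<n-1}. ((if m = r then ?T m else 0) - (if Suc m = r then ?T m else 0)))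
          = (\<Sum>m\<in>{0..<n-1}. (if m = r then ?T m else 0)) - (\<Sum>m\<in>{0..<n-1}. (if m = r' then ?T m else 0))"
        using Suc by (simp add: sum_subtractf)
      also have "\<dots> = (if r < n - 1 then ?T r else 0) - ?T r'"
        using Suc rs' by simp
      also have "\<dots> = v r"
      proof (cases "r < n - 1")
        case True
        then show ?thesis using Suc by simp
      next
        case False
        then have rn: "r = n - 1" using rs' by arith
        have "{..r} = {..<n}" using rn assms(1) by auto
        then have "?T r = (\<Sum>m<n. v m)" by simp
        then have "?T r' + v r = 0" using Suc assms(2) by simp
        then have "v r = - ?T r'" by (simp add: eq_neg_iff_add_eq_0 add.commute)
        then show ?thesis using False by simp
      qed
      finally show ?thesis .
    qed
    then show ?thesis using True rs' by simp
  qed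
  finally show "diagm n v $$ (r,s) = msum n (\<lambda>m. ?T m \<cdot>\<^sub>m hd n m (Suc m)) [0..<n-1] $$ (r,s)"
    by simp
qed

context hess begin

lemma H_diff: "X \<in> H \<Longrightarrow> Y \<in> H \<Longrightarrow> X - Y \<in> H"
proof -
  assume "X \<in> H" "Y \<in> H"
  then have c: "X \<in> carrier_mat n n" "Y \<in> carrier_mat n n" using H_carrier by auto
  have "X - Y = X + (-1) \<cdot>\<^sub>m Y" using c by (intro eq_matI) auto
  then show ?thesis using H_add H_smult \<open>X \<in> H\<close> \<open>Y \<in> H\<close> by metis
qed

lemma SUMOFF:
  assumes "Y \<in> carrier_mat n n"
    "\<And>r s. r < n \<Longrightarrow> s < n \<Longrightarrow> r \<noteq> s \<Longrightarrow> Y $$ (r,s) \<noteq> 0 \<Longrightarrow> E n r s \<in> H"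
  shows "offp n Y \<in> H"
proof -
  have "msum n (\<lambda>p. Y $$ p \<cdot>\<^sub>m E n (fst p) (snd p)) (pairs n) \<in> H"
  proof (rule H_msum)
    fix p assume p: "p \<in> set (pairs n)"
    show "Y $$ p \<cdot>\<^sub>m E n (fst p) (snd p) \<in> H"
    proof (cases "Y $$ p = 0")
      case True
      have "Y $$ p \<cdot>\<^sub>m E n (fst p) (snd p) = 0\<^sub>m n n" using True by (intro eq_matI) auto
      then show ?thesis using H_zero by simp
    next
      case False
      then show ?thesis using p assms(2)[of "fst p" "snd p"] H_smult by (auto simp: pairs_set)
    qed
  qed
  then show ?thesis using offp_msum[OF assms(1)] by simp
qed

lemma CHAR:
  assumes "Y \<in> carrier_mat n n"
    "\<And>r s. r < n \<Longrightarrow> s < n \<Longrightarrow> r \<noteq> s \<Longrightarrow> Y $$ (r,s) \<noteq> 0 \<Longrightarrow> E n r s \<in> H"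
    "dgp n Y \<in> H"
  shows "Y \<in> H"
  using H_add[OF SUMOFF[OF assms(1,2)] assms(3)] offp_dgp[OF assms(1)] by simp

lemma DGP:
  assumes "Y \<in> H" shows "dgp n Y \<in> H"
proof -
  have c: "Y \<in> carrier_mat n n" using assms H_carrier by auto
  have "offp n Y \<in> H" using c by (rule SUMOFF) (use CL assms in auto)
  moreover have "dgp n Y = Y - offp n Y" using c by (intro eq_matI) auto
  ultimately show ?thesis using H_diff assms by simp
qed

lemma TELE:
  assumes "n \<ge> 1" "(\<Sum>m<n. v m) = 0"
    "\<And>r. Suc r < n \<Longrightarrow> (\<Sum>i\<le>r. v i) \<noteq> 0 \<Longrightarrow> hd n r (Suc r) \<in> H"
  shows "diagm n v \<in> H"
proof -
  have "msum n (\<lambda>m. (\<Sum>i\<le>m. v i) \<cdot>\<^sub>m hd n m (Suc m)) [0..<n-1] \<in> H"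
  proof (rule H_msum)
    fix m assume m: "m \<in> set [0..<n-1]"
    show "(\<Sum>i\<le>m. v i) \<cdot>\<^sub>m hd n m (Suc m) \<in> H"
    proof (cases "(\<Sum>i\<le>m. v i) = 0")
      case True
      have "(\<Sum>i\<le>m. v i) \<cdot>\<^sub>m hd n m (Suc m) = 0\<^sub>m n n" using True by (intro eq_matI) auto
      then show ?thesis using H_zero by simp
    next
      case False
      then show ?thesis using m assms(3)[of m] H_smult by auto
    qed
  qed
  then show ?thesis using diagm_msum[OF assms(1,2)] by simp
qed

end


lemma ut_zero: "upper_triangular A \<Longrightarrow> A \<in> carrier_mat n n \<Longrightarrow> a < r \<Longrightarrow> r < n \<Longrightarrow> A $$ (r,a) = 0"
  by auto

lemma ut_diag_nonzero:
  fixes b :: "complex mat"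
  assumes "upper_triangular b" "b \<in> carrier_mat n n" "det b \<noteq> 0" "s < n"
  shows "b $$ (s,s) \<noteq> 0"
proof
  assume "b $$ (s,s) = 0"
  then have "0 \<in> set (diag_mat b)" using assms by (force simp: diag_mat_def)
  then have "prod_list (diag_mat b) = 0" by (simp add: prod_list_zero_iff)
  then show False using det_upper_triangular[OF assms(1,2)] assms(3) by simp
qed

lemma sum_single:
  assumes "(s::nat) < n" "\<And>m. m < n \<Longrightarrow> m \<noteq> s \<Longrightarrow> f m = (0::complex)"
  shows "(\<Sum>m<n. f m) = f s"
proof -
  have "(\<Sum>m<n. f m) = (\<Sum>m<n. if m = s then f s else 0)" using assms by (intro sum.cong) auto
  then show ?thesis using assms by simp
qed

lemma inv_ut:
  fixes b bi :: "complex mat"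
  assumes "upper_triangular b" "b \<in> carrier_mat n n" "det b \<noteq> 0" "bi \<in> carrier_mat n n" "bi * b = 1\<^sub>m n"
  shows "upper_triangular bi"
proof -
  have "\<forall>r. s < r \<longrightarrow> r < n \<longrightarrow> bi $$ (r,s) = 0" for s
  proof (induction s rule: less_induct)
    case (less s)
    show ?case
    proof (intro allI impI)
      fix r assume sr: "s < r" "r < n"
      have "0 = (bi * b) $$ (r,s)" using assms sr by simp
      also have "\<dots> = (\<Sum>m<n. bi $$ (r,m) * b $$ (m,s))" using assms sr by (intro mult_index) auto
      also have "\<dots> = bi $$ (r,s) * b $$ (s,s)"
      proof (rule sum_single)
        fix m assume m: "m < n" "m \<noteq> s"
        show "bi $$ (r,m) * b $$ (m,s) = 0"
        proof (cases "m < s")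
          case True then show ?thesis using less sr m by auto
        next
          case False then have "s < m" using m by auto
          then show ?thesis using ut_zero[OF assms(1,2) \<open>s < m\<close> m(1)] by simp
        qed
      qed (use sr in auto)
      finally show "bi $$ (r,s) = 0" using ut_diag_nonzero[OF assms(1-3), of s] sr by simp
    qed
  qed
  then show ?thesis using assms by (intro upper_triangularI) auto
qed

lemma triple_index:
  fixes A B C :: "complex mat"
  assumes "A \<in> carrier_mat n n" "B \<in> carrier_mat n n" "C \<in> carrier_mat n n" "r < n" "s < n"
  shows "(A * B * C) $$ (r,s) = (\<Sum>a<n. \<Sum>c<n. A $$ (r,a) * B $$ (a,c) * C $$ (c,s))"
proof -
  have "(A * B * C) $$ (r,s) = (\<Sum>c<n. (A * B) $$ (r,c) * C $$ (c,s))"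
    using assms by (intro mult_index) auto
  also have "\<dots> = (\<Sum>c<n. (\<Sum>a<n. A $$ (r,a) * B $$ (a,c)) * C $$ (c,s))"
    by (intro sum.cong refl arg_cong2[where f="(*)"] mult_index) (use assms in auto)
  also have "\<dots> = (\<Sum>c<n. \<Sum>a<n. A $$ (r,a) * B $$ (a,c) * C $$ (c,s))"
    by (simp add: sum_distrib_right)
  also have "\<dots> = (\<Sum>a<n. \<Sum>c<n. A $$ (r,a) * B $$ (a,c) * C $$ (c,s))"
    by (rule sum.swap)
  finally show ?thesis .
qed

lemma sum_atMost_as_lessThan:
  "r < (n::nat) \<Longrightarrow> (\<Sum>m\<le>r. f m) = (\<Sum>m<n. if m \<le> r then f m else (0::complex))"
proof -
  assume "r < n"
  then have "{..<n} \<inter> {..r} = {..r}" by auto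
  then have "(\<Sum>m\<le>r. f m) = (\<Sum>m\<in>{..<n} \<inter> {..r}. f m)" by simp
  also have "\<dots> = (\<Sum>m<n. if m \<in> {..r} then f m else 0)" by (rule sum.inter_restrict) simp
  finally show ?thesis by simp
qed

context hess begin

lemma diag_br:
  assumes "Z \<in> H" "r < m" "m < n" "Z $$ (r,r) \<noteq> Z $$ (m,m)"
  shows "E n r m \<in> H"
proof -
  have D: "dgp n Z \<in> H" using DGP assms by auto
  have K: "E n r m * dgp n Z - dgp n Z * E n r m \<in> H" using H_br[OF E_in_b_lie[OF assms(2,3)] D] .
  have "E n r m * dgp n Z - dgp n Z * E n r m = (Z $$ (m,m) - Z $$ (r,r)) \<cdot>\<^sub>m E n r m"
  proof (rule eq_matI)
    fix p q assume pq: "p < dim_row ((Z $$ (m,m) - Z $$ (r,r)) \<cdot>\<^sub>m E n r m)" "q < dim_col ((Z $$ (m,m) - Z $$ (r,r)) \<cdot>\<^sub>m E n r m)"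
    then have pq': "p < n" "q < n" by auto
    have 1: "(E n r m * dgp n Z) $$ (p,q) = (if p = r then dgp n Z $$ (m,q) else 0)"
      using pq' assms by (intro E_mult_left) auto
    have 2: "(dgp n Z * E n r m) $$ (p,q) = (if q = m then dgp n Z $$ (p,r) else 0)"
      using pq' assms by (intro E_mult_right) auto
    have "(E n r m * dgp n Z - dgp n Z * E n r m) $$ (p,q) = (E n r m * dgp n Z) $$ (p,q) - (dgp n Z * E n r m) $$ (p,q)"
      using pq' by (simp del: index_mult_mat(1))
    also have "\<dots> = ((Z $$ (m,m) - Z $$ (r,r)) \<cdot>\<^sub>m E n r m) $$ (p,q)"
      unfolding 1 2 using pq' assms by auto
    finally show "(E n r m * dgp n Z - dgp n Z * E n r m) $$ (p,q) = ((Z $$ (m,m) - Z $$ (r,r)) \<cdot>\<^sub>m E n r m) $$ (p,q)" .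
  qed auto
  then show ?thesis using K H_scale_back[of "Z $$ (m,m) - Z $$ (r,r)" "E n r m"] assms by auto
qed

lemma straddle:
  fixes b Z bi :: "complex mat"
  assumes "b \<in> carrier_mat n n" "Z \<in> carrier_mat n n" "bi \<in> carrier_mat n n"
    "upper_triangular b" "upper_triangular bi" "bi * b = 1\<^sub>m n" "r < n"
    "\<not> (\<exists>a c. c \<le> r \<and> r < a \<and> a < n \<and> Z $$ (a,c) \<noteq> 0)"
  shows "(\<Sum>m\<le>r. (b * Z * bi) $$ (m,m)) = (\<Sum>m\<le>r. Z $$ (m,m))"
proof -
  have per: "(\<Sum>m<n. if m \<le> r then b $$ (m,a) * Z $$ (a,c) * bi $$ (c,m) else 0)
      = (if c = a then (if a \<le> r then Z $$ (a,a) else 0) else 0)" if ac: "a < n" "c < n" for a c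
  proof (cases "a \<le> r")
    case True
    have "(\<Sum>m<n. if m \<le> r then b $$ (m,a) * Z $$ (a,c) * bi $$ (c,m) else 0)
        = (\<Sum>m<n. Z $$ (a,c) * (bi $$ (c,m) * b $$ (m,a)))"
    proof (intro sum.cong refl)
      fix m assume m: "m \<in> {..<n}"
      show "(if m \<le> r then b $$ (m,a) * Z $$ (a,c) * bi $$ (c,m) else 0) = Z $$ (a,c) * (bi $$ (c,m) * b $$ (m,a))"
      proof (cases "m \<le> r")
        case False then have "a < m" using True by auto
        then have "b $$ (m,a) = 0" using ut_zero[OF assms(4,1)] m by auto
        then show ?thesis using False by simp
      qed (simp add: mult.commute mult.left_commute)
    qed
    also have "\<dots> = Z $$ (a,c) * (bi * b) $$ (c,a)"
      using mult_index[of bi n b c a] assms ac by (simp add: sum_distrib_left del: index_mult_mat(1))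
    also have "\<dots> = (if c = a then (if a \<le> r then Z $$ (a,a) else 0) else 0)"
      using assms ac True by auto
    finally show ?thesis .
  next
    case False
    show ?thesis
    proof (cases "c \<le> r")
      case True
      then have "Z $$ (a,c) = 0" using assms(8) False ac by auto
      then show ?thesis using False by (simp add: sum.neutral)
    next
      case False2: False
      have "(\<Sum>m<n. if m \<le> r then b $$ (m,a) * Z $$ (a,c) * bi $$ (c,m) else 0) = 0"
      proof (intro sum.neutral ballI)
        fix m assume m: "m \<in> {..<n}"
        show "(if m \<le> r then b $$ (m,a) * Z $$ (a,c) * bi $$ (c,m) else 0) = 0"
        proof (cases "m \<le> r")
          case True then have "bi $$ (c,m) = 0" using ut_zero[OF assms(5,3)] m False2 ac by auto
          then show ?thesis by simp
        qed simp
      qed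
      then show ?thesis using False by auto
    qed
  qed
  have "(\<Sum>m\<le>r. (b * Z * bi) $$ (m,m)) = (\<Sum>m<n. if m \<le> r then (b * Z * bi) $$ (m,m) else 0)"
    using assms(7) by (rule sum_atMost_as_lessThan)
  also have "\<dots> = (\<Sum>m<n. if m \<le> r then (\<Sum>a<n. \<Sum>c<n. b $$ (m,a) * Z $$ (a,c) * bi $$ (c,m)) else 0)"
    by (intro sum.cong refl) (auto simp del: index_mult_mat(1) simp: triple_index[OF assms(1-3)])
  also have "\<dots> = (\<Sum>m<n. \<Sum>a<n. \<Sum>c<n. if m \<le> r then b $$ (m,a) * Z $$ (a,c) * bi $$ (c,m) else 0)"
    by (intro sum.cong refl) auto
  also have "\<dots> = (\<Sum>a<n. \<Sum>m<n. \<Sum>c<n. if m \<le> r then b $$ (m,a) * Z $$ (a,c) * bi $$ (c,m) else 0)"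
    by (rule sum.swap)
  also have "\<dots> = (\<Sum>a<n. \<Sum>c<n. \<Sum>m<n. if m \<le> r then b $$ (m,a) * Z $$ (a,c) * bi $$ (c,m) else 0)"
    by (intro sum.cong refl sum.swap)
  also have "\<dots> = (\<Sum>a<n. \<Sum>c<n. if c = a then (if a \<le> r then Z $$ (a,a) else 0) else 0)"
    using per by (intro sum.cong refl) auto
  also have "\<dots> = (\<Sum>a<n. if a \<le> r then Z $$ (a,a) else 0)"
    by (intro sum.cong refl) simp
  also have "\<dots> = (\<Sum>m\<le>r. Z $$ (m,m))"
    using assms(7) by (rule sum_atMost_as_lessThan[symmetric])
  finally show ?thesis .
qed

end


context hess begin

lemma AB:
  fixes b Z bi :: "complex mat"
  assumes ZH: "Z \<in> H" and bc: "b \<in> carrier_mat n n" and bu: "upper_triangular b" and db: "det b \<noteq> 0"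
    and bic: "bi \<in> carrier_mat n n" and inv: "bi * b = 1\<^sub>m n"
  shows "b * Z * bi \<in> H"
proof -
  have Zc: "Z \<in> carrier_mat n n" using ZH H_carrier by auto
  have biu: "upper_triangular bi" using inv_ut[OF bu bc db bic inv] .
  have bbi: "b * bi = 1\<^sub>m n" using mat_mult_left_right_inverse[OF bic bc inv] .
  define Y where "Y = b * Z * bi"
  have Yc: "Y \<in> carrier_mat n n" unfolding Y_def using bc Zc bic by auto
  have Yidx: "Y $$ (r,s) = (\<Sum>a<n. \<Sum>c<n. b $$ (r,a) * Z $$ (a,c) * bi $$ (c,s))" if "r < n" "s < n" for r s
    unfolding Y_def using triple_index[OF bc Zc bic that] .
  have "Y \<in> H"
  proof (rule CHAR[OF Yc])
    fix r s assume rs: "r < n" "s < n" "r \<noteq> s" "Y $$ (r,s) \<noteq> 0"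
    show "E n r s \<in> H"
    proof (rule ccontr)
      assume nE: "E n r s \<notin> H"
      have c1: "b $$ (r,a) * Z $$ (a,c) * bi $$ (c,s) = 0" if ac: "a < n" "c < n" "a \<noteq> c" for a c
      proof (rule ccontr)
        assume nz: "b $$ (r,a) * Z $$ (a,c) * bi $$ (c,s) \<noteq> 0"
        then have nz': "b $$ (r,a) \<noteq> 0" "Z $$ (a,c) \<noteq> 0" "bi $$ (c,s) \<noteq> 0" by auto
        have "r \<le> a" using nz'(1) ut_zero[OF bu bc, of a r] rs ac by (cases "a < r") auto
        moreover have "c \<le> s" using nz'(3) ut_zero[OF biu bic, of s c] rs ac by (cases "s < c") auto
        moreover have "E n a c \<in> H" using CL[OF ZH ac(3,1,2) nz'(2)] .
        ultimately have "E n r s \<in> H" using closure[of a c r s] ac rs by auto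
        then show False using nE by simp
      qed
      have c2: "Z $$ (m,m) = Z $$ (r,r)" if m: "r \<le> m" "m \<le> s" for m
      proof (rule ccontr)
        assume ne: "Z $$ (m,m) \<noteq> Z $$ (r,r)"
        then have "r < m" using m by (cases "r = m") auto
        moreover have "m < n" using m rs by auto
        ultimately have "E n r m \<in> H" using diag_br[OF ZH] ne by auto
        then have "E n r s \<in> H" using closure[of r m r s] m rs \<open>r < m\<close> by auto
        then show False using nE by simp
      qed
      have "Y $$ (r,s) = (\<Sum>a<n. \<Sum>c<n. b $$ (r,a) * Z $$ (a,c) * bi $$ (c,s))" using Yidx rs by simp
      also have "\<dots> = (\<Sum>a<n. b $$ (r,a) * Z $$ (a,a) * bi $$ (a,s))"
        by (intro sum.cong refl sum_single) (use c1 in auto)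
      also have "\<dots> = (\<Sum>a<n. Z $$ (r,r) * (b $$ (r,a) * bi $$ (a,s)))"
      proof (intro sum.cong refl)
        fix a assume a: "a \<in> {..<n}"
        show "b $$ (r,a) * Z $$ (a,a) * bi $$ (a,s) = Z $$ (r,r) * (b $$ (r,a) * bi $$ (a,s))"
        proof (cases "b $$ (r,a) = 0 \<or> bi $$ (a,s) = 0")
          case True then show ?thesis by auto
        next
          case False
          then have "r \<le> a" using ut_zero[OF bu bc, of a r] rs a by (cases "a < r") auto
          moreover have "a \<le> s" using False ut_zero[OF biu bic, of s a] rs a by (cases "s < a") auto
          ultimately have "Z $$ (a,a) = Z $$ (r,r)" using c2 by blast
          then show ?thesis by (simp add: mult.commute mult.left_commute)
        qed
      qed
      also have "\<dots> = Z $$ (r,r) * (b * bi) $$ (r,s)"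
        using mult_index[OF bc bic rs(1,2)] by (simp add: sum_distrib_left del: index_mult_mat(1))
      also have "\<dots> = 0" using bbi rs by simp
      finally show False using rs by simp
    qed
  next
    show "dgp n Y \<in> H"
    proof (cases "n = 0")
      case True
      have "dgp n Y = dgp n Z" using True by (intro eq_matI) auto
      then show ?thesis using DGP[OF ZH] by simp
    next
      case False
      then have n1: "n \<ge> 1" by simp
      define v where "v m = Y $$ (m,m) - Z $$ (m,m)" for m
      have eq: "dgp n Y = dgp n Z + diagm n v" by (intro eq_matI) (auto simp: v_def)
      have tv: "(\<Sum>i\<le>r. v i) = (\<Sum>i\<le>r. Y $$ (i,i)) - (\<Sum>i\<le>r. Z $$ (i,i))" for r
        by (simp add: v_def sum_subtractf)
      have "diagm n v \<in> H"
      proof (rule TELE[OF n1])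
        have "{..<n} = {..n-1}" using n1 by auto
        then have "(\<Sum>m<n. v m) = (\<Sum>i\<le>n-1. v i)" by simp
        also have "\<dots> = 0" unfolding tv Y_def
          by (subst straddle[OF bc Zc bic bu biu inv]) (use n1 in auto)
        finally show "(\<Sum>m<n. v m) = 0" .
      next
        fix r assume r: "Suc r < n" "(\<Sum>i\<le>r. v i) \<noteq> 0"
        have "\<exists>a c. c \<le> r \<and> r < a \<and> a < n \<and> Z $$ (a,c) \<noteq> 0"
        proof (rule ccontr)
          assume "\<not> (\<exists>a c. c \<le> r \<and> r < a \<and> a < n \<and> Z $$ (a,c) \<noteq> 0)"
          then have "(\<Sum>i\<le>r. v i) = 0" unfolding tv Y_def
            by (subst straddle[OF bc Zc bic bu biu inv]) (use r in auto)
          then show False using r by simp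
        qed
        then obtain a c where ac: "c \<le> r" "r < a" "a < n" "Z $$ (a,c) \<noteq> 0" by auto
        have "E n a c \<in> H" using CL[OF ZH _ ac(3) _ ac(4)] ac r by auto
        then have "E n (Suc r) r \<in> H" using closure[of a c "Suc r" r] ac r by auto
        then show "hd n r (Suc r) \<in> H" using hd_in_H[of "Suc r" r] r by auto
      qed
      then show ?thesis using eq H_add DGP[OF ZH] by simp
    qed
  qed
  then show ?thesis unfolding Y_def .
qed

end


definition el :: "nat \<Rightarrow> complex \<Rightarrow> nat \<Rightarrow> nat \<Rightarrow> complex mat" where
  "el n t u v = 1\<^sub>m n + t \<cdot>\<^sub>m E n u v"

lemma el_carrier[simp]: "el n t u v \<in> carrier_mat n n" by (simp add: el_def)
lemma el_dim[simp]: "dim_row (el n t u v) = n" "dim_col (el n t u v) = n" by (simp_all add: el_def)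
lemma el_index[simp]: "r < n \<Longrightarrow> s < n \<Longrightarrow> el n t u v $$ (r,s) = (if r = s then 1 else 0) + t * (if r = u \<and> s = v then 1 else 0)"
  by (simp add: el_def)

lemma el_mult_left:
  assumes "Y \<in> carrier_mat n n" "u < n" "v < n" "r < n" "s < n"
  shows "(el n t u v * Y) $$ (r,s) = Y $$ (r,s) + t * (if r = u then Y $$ (v,s) else 0)"
proof -
  have "el n t u v * Y = Y + t \<cdot>\<^sub>m (E n u v * Y)"
    unfolding el_def using assms
    by (simp add: add_mult_distrib_mat[of _ n n _ _ n] mult_smult_assoc_mat[of _ n n _ n])
  then show ?thesis using assms by (simp add: E_mult_left del: index_mult_mat(1))
qed

lemma el_mult_right:
  assumes "Y \<in> carrier_mat n n" "u < n" "v < n" "r < n" "s < n"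
  shows "(Y * el n t u v) $$ (r,s) = Y $$ (r,s) + t * (if s = v then Y $$ (r,u) else 0)"
proof -
  have "Y * el n t u v = Y + t \<cdot>\<^sub>m (Y * E n u v)"
    unfolding el_def using assms
    by (simp add: mult_add_distrib_mat[of _ n n _ n] mult_smult_distrib[of _ n n _ n])
  then show ?thesis using assms by (simp add: E_mult_right del: index_mult_mat(1))
qed

lemma el_inv:
  assumes "u \<noteq> v" "u < n" "v < n"
  shows "el n (-t) u v * el n t u v = 1\<^sub>m n"
proof (rule eq_matI)
  fix i j assume ij: "i < dim_row (1\<^sub>m n :: complex mat)" "j < dim_col (1\<^sub>m n :: complex mat)"
  then have ij': "i < n" "j < n" by auto
  have "(el n (-t) u v * el n t u v) $$ (i,j) = el n t u v $$ (i,j) + (-t) * (if i = u then el n t u v $$ (v,j) else 0)"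
    by (rule el_mult_left) (use assms ij' in auto)
  then show "(el n (-t) u v * el n t u v) $$ (i,j) = (1\<^sub>m n :: complex mat) $$ (i,j)"
    using assms ij' by auto
qed auto

lemma one_Bor: "1\<^sub>m n \<in> Bor n"
  unfolding Bor_def SL_def by auto

lemma el_Bor:
  assumes "u < v" "v < n"
  shows "el n t u v \<in> Bor n"
proof -
  have ut: "upper_triangular (el n t u v)"
  proof (rule upper_triangularI)
    fix i j assume "j < i" "i < dim_row (el n t u v)"
    then show "el n t u v $$ (i,j) = 0" using assms by auto
  qed
  have "diag_mat (el n t u v) = map (\<lambda>i. 1) [0..<n]"
    unfolding diag_mat_def el_dim by (intro map_cong refl) (use assms in auto)
  then have "det (el n t u v) = 1" using det_upper_triangular[OF ut el_carrier]
    by (simp add: map_replicate_const)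
  then show ?thesis using ut unfolding Bor_def SL_def by auto
qed

lemma Bor_mult:
  assumes "b \<in> Bor n" "b2 \<in> Bor n"
  shows "b * b2 \<in> Bor n"
proof -
  have c: "b \<in> carrier_mat n n" "b2 \<in> carrier_mat n n" "upper_triangular b" "upper_triangular b2"
    "det b = 1" "det b2 = 1"
    using assms unfolding Bor_def SL_def by auto
  have "upper_triangular (b * b2)"
  proof (rule upper_triangularI)
    fix r s assume rs: "s < r" "r < dim_row (b * b2)"
    then have r: "r < n" using c by simp
    have "(b * b2) $$ (r,s) = (\<Sum>m<n. b $$ (r,m) * b2 $$ (m,s))" using c r rs by (intro mult_index) auto
    also have "\<dots> = 0"
    proof (intro sum.neutral ballI)
      fix m assume m: "m \<in> {..<n}"
      show "b $$ (r,m) * b2 $$ (m,s) = 0"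
      proof (cases "m < r")
        case True then show ?thesis using ut_zero[OF c(3,1)] r m by auto
      next
        case False then show ?thesis using ut_zero[OF c(4,2), of s m] rs m by auto
      qed
    qed
    finally show "(b * b2) $$ (r,s) = 0" .
  qed
  moreover have "det (b * b2) = 1" using det_mult[OF c(1,2)] c by simp
  ultimately show ?thesis using c unfolding Bor_def SL_def by auto
qed

definition Sset :: "nat \<Rightarrow> complex mat \<Rightarrow> (nat \<times> nat) set" where
  "Sset n x = {(p,q). \<exists>b bi. b \<in> Bor n \<and> bi \<in> carrier_mat n n \<and> bi * b = 1\<^sub>m n \<and> (bi * x * b) $$ (p,q) \<noteq> 0}"

lemma quad:
  fixes A B C :: complex
  assumes "A \<noteq> 0 \<or> B \<noteq> 0 \<or> C \<noteq> 0"
  shows "\<exists>t::complex. A + t * B - t * t * C \<noteq> 0"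
proof (rule ccontr)
  assume "\<not> ?thesis"
  then have "A + 0 * B - 0 * 0 * C = 0" "A + 1 * B - 1 * 1 * C = 0" "A + (-1) * B - (-1) * (-1) * C = 0"
    by blast+
  then have "A = 0" "B = 0" "C = 0" by (auto simp: algebra_simps)
  then show False using assms by simp
qed

lemma Smove:
  assumes xc: "x \<in> carrier_mat n n" and b: "b \<in> Bor n" "bi \<in> carrier_mat n n" "bi * b = 1\<^sub>m n"
    and uv: "u < v" "v < n" and rs: "r < n" "s < n"
    and nz: "(bi * x * b) $$ (r,s) \<noteq> 0
       \<or> ((if s = v then (bi * x * b) $$ (r,u) else 0) - (if r = u then (bi * x * b) $$ (v,s) else 0)) \<noteq> 0
       \<or> (if r = u \<and> s = v then (bi * x * b) $$ (v,u) else 0) \<noteq> 0"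
  shows "(r,s) \<in> Sset n x"
proof -
  define Y where "Y = bi * x * b"
  have bc: "b \<in> carrier_mat n n" using b unfolding Bor_def SL_def by auto
  have Yc: "Y \<in> carrier_mat n n" unfolding Y_def using xc bc b by auto
  obtain t where t: "Y $$ (r,s) + t * ((if s = v then Y $$ (r,u) else 0) - (if r = u then Y $$ (v,s) else 0))
      - t * t * (if r = u \<and> s = v then Y $$ (v,u) else 0) \<noteq> 0"
    using quad nz unfolding Y_def[symmetric] by blast
  define b2 where "b2 = b * el n t u v"
  define bi2 where "bi2 = el n (-t) u v * bi"
  have b2B: "b2 \<in> Bor n" unfolding b2_def using Bor_mult[OF b(1) el_Bor[OF uv]] .
  have bi2c: "bi2 \<in> carrier_mat n n" unfolding bi2_def using b by auto
  have e1: "bi * (b * el n t u v) = el n t u v"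
  proof -
    have "bi * (b * el n t u v) = (bi * b) * el n t u v"
      using assoc_mult_mat[of bi n n b n "el n t u v" n] b bc by simp
    then show ?thesis using b by simp
  qed
  have "bi2 * b2 = el n (-t) u v * (bi * (b * el n t u v))"
    unfolding bi2_def b2_def using b bc by (simp add: assoc_mult_mat[of _ n n _ n _ n])
  also have "\<dots> = 1\<^sub>m n" using el_inv[of u v n t] uv e1 by simp
  finally have inv2: "bi2 * b2 = 1\<^sub>m n" .
  have eq: "bi2 * x * b2 = el n (-t) u v * Y * el n t u v"
    unfolding bi2_def b2_def Y_def using b bc xc by (simp add: assoc_mult_mat[of _ n n _ n _ n])
  have "(el n (-t) u v * Y * el n t u v) $$ (r,s)
     = (el n (-t) u v * Y) $$ (r,s) + t * (if s = v then (el n (-t) u v * Y) $$ (r,u) else 0)"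
    using Yc uv rs by (intro el_mult_right) auto
  also have "\<dots> = Y $$ (r,s) + t * ((if s = v then Y $$ (r,u) else 0) - (if r = u then Y $$ (v,s) else 0))
      - t * t * (if r = u \<and> s = v then Y $$ (v,u) else 0)"
    using Yc uv rs by (auto simp: el_mult_left algebra_simps simp del: index_mult_mat(1))
  finally have "(bi2 * x * b2) $$ (r,s) \<noteq> 0" using t eq by simp
  then show ?thesis unfolding Sset_def using b2B bi2c inv2 by blast
qed

lemma S_base:
  assumes "x \<in> carrier_mat n n" "x $$ (p,q) \<noteq> 0" "p < n" "q < n"
  shows "(p,q) \<in> Sset n x"
  unfolding Sset_def using assms one_Bor[of n] by (auto intro!: exI[of _ "1\<^sub>m n"])

lemma S_get:
  assumes "(p,q) \<in> Sset n x"
  obtains b bi where "b \<in> Bor n" "bi \<in> carrier_mat n n" "bi * b = 1\<^sub>m n" "(bi * x * b) $$ (p,q) \<noteq> 0"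
  using assms unfolding Sset_def by blast

lemma S_row:
  assumes xc: "x \<in> carrier_mat n n" and S: "(p,q) \<in> Sset n x" and "p \<noteq> q" "p' < p" "p < n" "q < n" "p' \<noteq> q"
  shows "(p',q) \<in> Sset n x"
proof -
  obtain b bi where b: "b \<in> Bor n" "bi \<in> carrier_mat n n" "bi * b = 1\<^sub>m n" "(bi * x * b) $$ (p,q) \<noteq> 0"
    using S_get[OF S] .
  show ?thesis by (rule Smove[OF xc b(1-3), of p' p]) (use assms b(4) in auto)
qed

lemma S_col:
  assumes xc: "x \<in> carrier_mat n n" and S: "(p,q) \<in> Sset n x" and "p \<noteq> q" "q < q'" "q' < n" "p < n" "p \<noteq> q'"
  shows "(p,q') \<in> Sset n x"
proof -
  obtain b bi where b: "b \<in> Bor n" "bi \<in> carrier_mat n n" "bi * b = 1\<^sub>m n" "(bi * x * b) $$ (p,q) \<noteq> 0"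
    using S_get[OF S] .
  show ?thesis by (rule Smove[OF xc b(1-3), of q q']) (use assms b(4) in auto)
qed

lemma S_flip:
  assumes xc: "x \<in> carrier_mat n n" and S: "(p,q) \<in> Sset n x" and "q < p" "p < n"
  shows "(q,p) \<in> Sset n x"
proof -
  obtain b bi where b: "b \<in> Bor n" "bi \<in> carrier_mat n n" "bi * b = 1\<^sub>m n" "(bi * x * b) $$ (p,q) \<noteq> 0"
    using S_get[OF S] .
  show ?thesis by (rule Smove[OF xc b(1-3), of q p]) (use assms b(4) in auto)
qed

lemma S_diag:
  assumes xc: "x \<in> carrier_mat n n" and "j < k" "k < n" "x $$ (j,j) \<noteq> x $$ (k,k)"
  shows "(j,k) \<in> Sset n x"
  by (rule Smove[OF xc one_Bor, of "1\<^sub>m n" j k]) (use assms in auto)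

lemma S_closure:
  assumes xc: "x \<in> carrier_mat n n" and S: "(a,b) \<in> Sset n x" and "a < n" "b < n" "a \<noteq> b"
    "a' \<le> a" "b \<le> b'" "b' < n" "a' \<noteq> b'"
  shows "(a',b') \<in> Sset n x"
proof (cases "a' \<noteq> b")
  case True
  have 1: "(a',b) \<in> Sset n x"
  proof (cases "a' = a")
    case False then show ?thesis using S_row[OF xc S] assms True by auto
  qed (use assms in auto)
  show ?thesis
  proof (cases "b = b'")
    case False then show ?thesis using S_col[OF xc 1] assms True by auto
  qed (use 1 in auto)
next
  case False
  then have ab: "a' = b" by simp
  show ?thesis
  proof (cases "a = b'")
    case False
    have 1: "(a,b') \<in> Sset n x"
    proof (cases "b = b'")
      case False then show ?thesis using S_col[OF xc S] assms \<open>a \<noteq> b'\<close> by auto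
    qed (use assms in auto)
    show ?thesis
    proof (cases "a = a'")
      case False then show ?thesis using S_row[OF xc 1] assms \<open>a \<noteq> b'\<close> by auto
    qed (use 1 in auto)
  next
    case True
    then show ?thesis using S_flip[OF xc S] assms ab by auto
  qed
qed



definition cj :: "nat \<Rightarrow> (nat \<Rightarrow> nat) \<Rightarrow> complex mat \<Rightarrow> complex mat" where
  "cj n sg Y = mat n n (\<lambda>(r,s). Y $$ (inv_into UNIV sg r, inv_into UNIV sg s))"

lemma cj_carrier[simp]: "cj n sg Y \<in> carrier_mat n n" by (simp add: cj_def)
lemma cj_dim[simp]: "dim_row (cj n sg Y) = n" "dim_col (cj n sg Y) = n" by (simp_all add: cj_def)
lemma cj_index[simp]: "r < n \<Longrightarrow> s < n \<Longrightarrow> cj n sg Y $$ (r,s) = Y $$ (inv_into UNIV sg r, inv_into UNIV sg s)"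
  by (simp add: cj_def)

lemma perm_mat_carrier[simp]: "perm_mat n sg \<in> carrier_mat n n" by (simp add: perm_mat_def)
lemma perm_mat_dim[simp]: "dim_row (perm_mat n sg) = n" "dim_col (perm_mat n sg) = n" by (simp_all add: perm_mat_def)
lemma perm_mat_index[simp]: "r < n \<Longrightarrow> c < n \<Longrightarrow> perm_mat n sg $$ (r,c) = (if r = sg c then 1 else 0)"
  by (simp add: perm_mat_def)

lemma inv_lt: "sg permutes {..<n} \<Longrightarrow> r < n \<Longrightarrow> inv_into UNIV sg r < n"
proof -
  assume a: "sg permutes {..<n}" "r < n"
  have "inv_into UNIV sg permutes {..<n}" using permutes_inv[OF a(1)] .
  from permutes_in_image[OF this, of r] a(2) show ?thesis by simp
qed

lemma perm_left:
  assumes s: "sg permutes {..<n}" and Y: "Y \<in> carrier_mat n n"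
  shows "perm_mat n sg * Y = mat n n (\<lambda>(r,c). Y $$ (inv_into UNIV sg r, c))"
proof (rule eq_matI)
  fix r c assume rc: "r < dim_row (mat n n (\<lambda>(r,c). Y $$ (inv_into UNIV sg r, c)))" "c < dim_col (mat n n (\<lambda>(r,c). Y $$ (inv_into UNIV sg r, c)))"
  then have rc': "r < n" "c < n" by auto
  have "(perm_mat n sg * Y) $$ (r,c) = (\<Sum>m<n. perm_mat n sg $$ (r,m) * Y $$ (m,c))"
    using Y rc' by (intro mult_index) auto
  also have "\<dots> = perm_mat n sg $$ (r, inv_into UNIV sg r) * Y $$ (inv_into UNIV sg r, c)"
  proof (rule sum_single)
    show "inv_into UNIV sg r < n" using inv_lt[OF s rc'(1)] .
    fix m assume m: "m < n" "m \<noteq> inv_into UNIV sg r"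
    have "r \<noteq> sg m" using m permutes_inverses[OF s] by metis
    then show "perm_mat n sg $$ (r,m) * Y $$ (m,c) = 0" using rc' m by simp
  qed
  also have "\<dots> = Y $$ (inv_into UNIV sg r, c)" using rc' inv_lt[OF s rc'(1)] permutes_inverses[OF s] by simp
  finally show "(perm_mat n sg * Y) $$ (r,c) = mat n n (\<lambda>(r,c). Y $$ (inv_into UNIV sg r, c)) $$ (r,c)"
    using rc' by simp
qed (use Y in auto)

lemma perm_right:
  assumes s: "sg permutes {..<n}" and Y: "Y \<in> carrier_mat n n"
  shows "Y * perm_mat n (inv_into UNIV sg) = mat n n (\<lambda>(r,c). Y $$ (r, inv_into UNIV sg c))"
proof (rule eq_matI)
  fix r c assume rc: "r < dim_row (mat n n (\<lambda>(r,c). Y $$ (r, inv_into UNIV sg c)))" "c < dim_col (mat n n (\<lambda>(r,c). Y $$ (r, inv_into UNIV sg c)))"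
  then have rc': "r < n" "c < n" by auto
  have "(Y * perm_mat n (inv_into UNIV sg)) $$ (r,c) = (\<Sum>m<n. Y $$ (r,m) * perm_mat n (inv_into UNIV sg) $$ (m,c))"
    using Y rc' by (intro mult_index) auto
  also have "\<dots> = (\<Sum>m<n. Y $$ (r,m) * (if m = inv_into UNIV sg c then 1 else 0))"
    using rc' by (intro sum.cong refl) auto
  also have "\<dots> = Y $$ (r, inv_into UNIV sg c)" using inv_lt[OF s rc'(2)] by (rule sum_delta_r)
  finally show "(Y * perm_mat n (inv_into UNIV sg)) $$ (r,c) = mat n n (\<lambda>(r,c). Y $$ (r, inv_into UNIV sg c)) $$ (r,c)"
    using rc' by simp
qed (use Y in auto)

lemma perm_inv:
  assumes s: "sg permutes {..<n}"
  shows "perm_mat n sg * perm_mat n (inv_into UNIV sg) = 1\<^sub>m n"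
proof -
  have "perm_mat n sg * perm_mat n (inv_into UNIV sg) = mat n n (\<lambda>(r,c). perm_mat n (inv_into UNIV sg) $$ (inv_into UNIV sg r, c))"
    using perm_left[OF s] by simp
  also have "\<dots> = 1\<^sub>m n"
  proof (rule eq_matI)
    fix r c assume "r < dim_row (1\<^sub>m n :: complex mat)" "c < dim_col (1\<^sub>m n :: complex mat)"
    then have rc: "r < n" "c < n" by auto
    have "(inv_into UNIV sg r = inv_into UNIV sg c) = (r = c)" using permutes_inverses[OF s] by metis
    then show "mat n n (\<lambda>(r,c). perm_mat n (inv_into UNIV sg) $$ (inv_into UNIV sg r, c)) $$ (r,c) = (1\<^sub>m n :: complex mat) $$ (r,c)"
      using rc inv_lt[OF s rc(1)] by auto
  qed auto
  finally show ?thesis .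
qed

lemma perm_conj:
  assumes s: "sg permutes {..<n}" and Y: "Y \<in> carrier_mat n n"
  shows "perm_mat n sg * Y * perm_mat n (inv_into UNIV sg) = cj n sg Y"
proof -
  have "perm_mat n sg * Y * perm_mat n (inv_into UNIV sg) = mat n n (\<lambda>(r,c). Y $$ (inv_into UNIV sg r, c)) * perm_mat n (inv_into UNIV sg)"
    using perm_left[OF s Y] by simp
  also have "\<dots> = mat n n (\<lambda>(r,c). mat n n (\<lambda>(r,c). Y $$ (inv_into UNIV sg r, c)) $$ (r, inv_into UNIV sg c))"
    by (rule perm_right[OF s]) simp
  also have "\<dots> = cj n sg Y"
    by (rule eq_matI) (auto simp: inv_lt[OF s])
  finally show ?thesis .
qed

lemma cancel:
  fixes A B X :: "complex mat"
  assumes "A \<in> carrier_mat n n" "B \<in> carrier_mat n n" "X \<in> carrier_mat n m" "A * B = 1\<^sub>m n"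
  shows "A * (B * X) = X"
proof -
  have "A * (B * X) = (A * B) * X" using assoc_mult_mat[of A n n B n X m] assms by simp
  then show ?thesis using assms by simp
qed

lemma root_exists:
  fixes z :: complex
  assumes "z \<noteq> 0" "n > 0"
  shows "\<exists>c. c ^ n = z"
proof -
  have "bij_betw (\<lambda>y. (root n (norm z) * cis (Arg z / n)) * y) {y. y ^ n = 1} {y. y ^ n = z}"
    by (rule bij_betw_nth_root_unity[OF assms])
  then have "(\<lambda>y. (root n (norm z) * cis (Arg z / n)) * y) ` {y. y ^ n = 1} = {y. y ^ n = z}"
    by (simp add: bij_betw_def)
  moreover have "(1::complex) \<in> {y. y ^ n = 1}" by simp
  ultimately have "(root n (norm z) * cis (Arg z / n)) * 1 \<in> {y. y ^ n = z}"
    by (metis (no_types, lifting) image_eqI)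
  then show ?thesis by (metis mem_Collect_eq mult.right_neutral)
qed



lemma smult_smult_mat: "(c::complex) \<cdot>\<^sub>m (d \<cdot>\<^sub>m A) = (c * d) \<cdot>\<^sub>m A"
  by (rule eq_matI) auto

lemma smult_inv_cancel: "(c::complex) \<noteq> 0 \<Longrightarrow> c \<cdot>\<^sub>m ((1/c) \<cdot>\<^sub>m A) = A"
  "(c::complex) \<noteq> 0 \<Longrightarrow> (1/c) \<cdot>\<^sub>m (c \<cdot>\<^sub>m A) = A"
  by (rule eq_matI; auto)+

context hess begin

lemma HYP:
  fixes w :: "nat \<Rightarrow> nat" and x :: "complex mat"
  assumes w: "w permutes {..<n}" and n0: "n > 0" and xc: "x \<in> carrier_mat n n"
    and sc: "schubert_cell n (inv_into UNIV w) \<subseteq> hess_var n x H"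
    and b: "b \<in> Bor n" and bic: "bi \<in> carrier_mat n n" and inv: "bi * b = 1\<^sub>m n"
  shows "cj n w (bi * x * b) \<in> H"
proof -
  note asc[simp] = assoc_mult_mat[of _ n n _ n _ n]
  define P0 where "P0 = perm_mat n (inv_into UNIV w)"
  define Pw where "Pw = perm_mat n w"
  have iw: "inv_into UNIV w permutes {..<n}" using permutes_inv[OF w] .
  have P0Pw: "P0 * Pw = 1\<^sub>m n"
    using perm_inv[OF iw] permutes_inv_inv[OF w] unfolding P0_def Pw_def by simp
  have PwP0: "Pw * P0 = 1\<^sub>m n" using perm_inv[OF w] unfolding P0_def Pw_def by simp
  have P0c: "P0 \<in> carrier_mat n n" "Pw \<in> carrier_mat n n" unfolding P0_def Pw_def by auto
  have "det P0 * det Pw = 1" using det_mult[OF P0c] P0Pw by simp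
  then have dP0: "det P0 \<noteq> 0" by auto
  obtain c0 where c0: "c0 ^ n = 1 / det P0" using root_exists[of "1 / det P0" n] dP0 n0 by auto
  define d0 where "d0 = c0 \<cdot>\<^sub>m P0"
  have d0c: "d0 \<in> carrier_mat n n" unfolding d0_def using P0c by simp
  have dd0: "det d0 = 1" unfolding d0_def using c0 dP0 P0c by simp
  then have "c0 \<noteq> 0" using n0 unfolding d0_def using P0c by (auto simp: zero_power)
  have d0dots: "d0 \<in> dots n (inv_into UNIV w)"
    unfolding dots_def SL_def using d0c dd0 by (auto simp: d0_def P0_def)
  define d0i where "d0i = (1 / c0) \<cdot>\<^sub>m Pw"
  have d0ic: "d0i \<in> carrier_mat n n" unfolding d0i_def using P0c by simp
  have d0inv: "d0i * d0 = 1\<^sub>m n"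
    unfolding d0i_def d0_def using P0c \<open>c0 \<noteq> 0\<close> PwP0
    by (simp add: mult_smult_assoc_mat[of _ n n _ n] mult_smult_distrib[of _ n n _ n] smult_inv_cancel)
  have bc: "b \<in> carrier_mat n n" using b unfolding Bor_def SL_def by auto
  have "coset n (b * d0) \<in> schubert_cell n (inv_into UNIV w)"
    unfolding schubert_cell_def using b d0dots by blast
  then have "coset n (b * d0) \<in> hess_var n x H" using sc by auto
  then obtain g gi where g: "coset n (b * d0) = coset n g" "g \<in> SL n" "gi \<in> carrier_mat n n"
      "gi * g = 1\<^sub>m n" "gi * x * g \<in> H"
    unfolding hess_var_def by blast
  have gc: "g \<in> carrier_mat n n" using g unfolding SL_def by auto
  have "g \<in> coset n g" unfolding coset_def using one_Bor[of n] gc by (auto intro!: exI[of _ "1\<^sub>m n"])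
  then have "g \<in> coset n (b * d0)" using g by simp
  then obtain b' where b': "g = b * d0 * b'" "b' \<in> Bor n" unfolding coset_def by blast
  have b'c: "b' \<in> carrier_mat n n" "upper_triangular b'" "det b' = 1" using b' unfolding Bor_def SL_def by auto
  define b'i where "b'i = gi * (b * d0)"
  have b'ic: "b'i \<in> carrier_mat n n" unfolding b'i_def using g bc d0c by auto
  have ggi: "g * gi = 1\<^sub>m n" using mat_mult_left_right_inverse[OF g(3) gc g(4)] .
  have gR: "g = b * (d0 * b')" using b' bc d0c b'c by simp
  have b'inv: "b'i * b' = 1\<^sub>m n"
  proof -
    have "b'i * b' = gi * (b * (d0 * b'))" unfolding b'i_def using g bc d0c b'c by simp
    then show ?thesis using gR g by simp
  qed
  have ABr: "b' * (gi * x * g) * b'i \<in> H"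
    using AB[OF g(5) b'c(1,2)] b'c(3) b'ic b'inv by simp
  have e1: "d0i * (bi * g) = b'"
  proof -
    have "bi * g = d0 * b'" unfolding gR using cancel[where m=n, OF bic bc _ inv, of "d0 * b'"] d0c b'c by simp
    then show ?thesis using cancel[where m=n, OF d0ic d0c b'c(1) d0inv] by simp
  qed
  have e2: "b' * gi = d0i * bi"
  proof -
    have "b' * gi = d0i * (bi * g) * gi" using e1 by simp
    also have "\<dots> = d0i * (bi * (g * gi))" using d0ic bic gc g(3) by simp
    also have "\<dots> = d0i * bi" using ggi bic by simp
    finally show ?thesis .
  qed
  have e3: "g * b'i = b * d0"
    unfolding b'i_def using cancel[where m=n, OF gc g(3) _ ggi, of "b * d0"] bc d0c by simp
  have "b' * (gi * x * g) * b'i = (b' * gi) * x * (g * b'i)"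
    using b'c gc g(3) xc b'ic by simp
  also have "\<dots> = d0i * (bi * x * b) * d0" unfolding e2 e3 using d0ic bic xc bc d0c by simp
  also have "\<dots> = Pw * (bi * x * b) * P0"
    unfolding d0i_def d0_def using P0c \<open>c0 \<noteq> 0\<close> bic xc bc
    by (simp add: mult_smult_assoc_mat[of _ n n _ n] mult_smult_distrib[of _ n n _ n] smult_inv_cancel)
  also have "\<dots> = cj n w (bi * x * b)"
    unfolding Pw_def P0_def using perm_conj[OF w, of "bi * x * b"] bic xc bc by simp
  finally show ?thesis using ABr by simp
qed

end

theorem lemma4p3:
  fixes n i j k l :: nat and w :: "nat \<Rightarrow> nat" and x :: "complex mat" and H :: "complex mat set"
  assumes "w permutes {..<n}"
    and "i < j" "j < k" "k < l" "l < n"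
    and "w l < w j" "w j < w k" "w k < w i"
    and "x \<in> sl n"
    and "hessenberg_space n H"
    and "schubert_cell n (inv_into UNIV w) \<subseteq> hess_var n x H"
  shows "\<forall>dd \<in> dots n (\<lambda>m. if m = j then w k else if m = k then w j else w m).
           \<forall>di \<in> carrier_mat n n. di * dd = 1\<^sub>m n \<longrightarrow> coset n di \<in> hess_var n x H"
proof (intro ballI impI)
  note w = assms(1)
  interpret hess n H using assms(10) by (simp add: hess_def)
  have xc: "x \<in> carrier_mat n n" using assms(9) unfolding sl_def by auto
  have n0: "n > 0" using assms by auto
  define tau where "tau = (\<lambda>m. if m = j then w k else if m = k then w j else w m)"
  have tau_eq: "tau = w \<circ> Transposition.transpose j k"
    unfolding tau_def by (auto simp: Transposition.transpose_def)
  have tp: "tau permutes {..<n}" unfolding tau_eq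
    using permutes_compose[OF permutes_swap_id w] assms by auto
  have tj: "tau j = w k" and tk: "tau k = w j" and to: "\<And>m. m \<noteq> j \<Longrightarrow> m \<noteq> k \<Longrightarrow> tau m = w m"
    unfolding tau_def using assms by auto
  have HYP': "cj n w (bi * x * b) \<in> H" if "b \<in> Bor n" "bi \<in> carrier_mat n n" "bi * b = 1\<^sub>m n" for b bi
    by (rule HYP[OF w n0 xc assms(11) that])
  have G: "E n (w p) (w q) \<in> H" if pq: "(p,q) \<in> Sset n x" "p < n" "q < n" "p \<noteq> q" for p q
  proof -
    obtain b bi where b: "b \<in> Bor n" "bi \<in> carrier_mat n n" "bi * b = 1\<^sub>m n" "(bi * x * b) $$ (p,q) \<noteq> 0"
      using S_get[OF pq(1)] .
    have wp: "w p < n" "w q < n" using pq permutes_in_image[OF w] by auto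
    have "w p \<noteq> w q" using pq permutes_inj[OF w] by (auto dest: injD)
    moreover have "cj n w (bi * x * b) $$ (w p, w q) \<noteq> 0"
      using b(4) wp permutes_inverses[OF w] by simp
    ultimately show ?thesis using CL[OF HYP'[OF b(1-3)]] wp by auto
  qed
  have FIN: "E n (tau p) (tau q) \<in> H"
    if f: "x $$ (p,q) \<noteq> 0" "p < n" "q < n" "p \<noteq> q" "p' \<le> p" "q \<le> q'" "q' < n" "p' \<noteq> q'"
       "tau p \<le> w p'" "w q' \<le> tau q" for p q p' q'
  proof -
    have "(p',q') \<in> Sset n x" using S_closure[OF xc S_base[OF xc f(1-3)]] f by auto
    then have "E n (w p') (w q') \<in> H" using G f by auto
    moreover have "w p' < n" "w q' < n" using f permutes_in_image[OF w] by auto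
    moreover have "w p' \<noteq> w q'" using f permutes_inj[OF w] by (auto dest: injD)
    moreover have "tau q < n" using f permutes_in_image[OF tp] by auto
    moreover have "tau p \<noteq> tau q" using f permutes_inj[OF tp] by (auto dest: injD)
    ultimately show ?thesis using closure[of "w p'" "w q'" "tau p" "tau q"] f by auto
  qed
  have main: "cj n tau x \<in> H"
  proof (rule CHAR)
    show "cj n tau x \<in> carrier_mat n n" by simp
  next
    fix r s assume rs: "r < n" "s < n" "r \<noteq> s" "cj n tau x $$ (r,s) \<noteq> 0"
    define p where "p = inv_into UNIV tau r"
    define q where "q = inv_into UNIV tau s"
    have pq: "p < n" "q < n" unfolding p_def q_def using inv_lt[OF tp] rs by auto
    have rp: "r = tau p" "s = tau q" unfolding p_def q_def using permutes_inverses[OF tp] by auto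
    have "p \<noteq> q" using rp rs by auto
    have xpq: "x $$ (p,q) \<noteq> 0" using rs unfolding p_def q_def by simp
    have "E n (tau p) (tau q) \<in> H"
    proof -
      consider (A) "p \<noteq> j" "p \<noteq> k" "q \<noteq> j" "q \<noteq> k" | (B) "p = j" "q = k" | (C) "p = k" "q = j"
        | (D) "p = j" "q \<noteq> j" "q \<noteq> k" "q \<noteq> i" | (E) "p = j" "q = i" | (F) "p = k" "q \<noteq> j" "q \<noteq> k"
        | (G) "q = j" "p \<noteq> j" "p \<noteq> k" | (H) "q = k" "p \<noteq> j" "p \<noteq> k" "p \<noteq> l" | (I) "q = k" "p = l"
        using \<open>p \<noteq> q\<close> by blast
      then show ?thesis
      proof cases
        case A then show ?thesis using FIN[of p q p q] xpq pq \<open>p \<noteq> q\<close> to by auto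
      next
        case B then show ?thesis using FIN[of p q i l] xpq pq \<open>p \<noteq> q\<close> tj tk assms by auto
      next
        case C then show ?thesis using FIN[of p q k j] xpq pq \<open>p \<noteq> q\<close> tj tk assms by auto
      next
        case D then show ?thesis using FIN[of p q i q] xpq pq \<open>p \<noteq> q\<close> tj to assms by auto
      next
        case E
        have "tau i = w i" using to assms by auto
        then show ?thesis using E FIN[of p q i l] xpq pq \<open>p \<noteq> q\<close> tj assms by auto
      next
        case F then show ?thesis using FIN[of p q k q] xpq pq \<open>p \<noteq> q\<close> tk to assms by auto
      next
        case G then show ?thesis using FIN[of p q p j] xpq pq \<open>p \<noteq> q\<close> tj to assms by auto
      next
        case H then show ?thesis using FIN[of p q p l] xpq pq \<open>p \<noteq> q\<close> tk to assms by auto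
      next
        case I
        have "tau l = w l" using to assms by auto
        then show ?thesis using I FIN[of p q i l] xpq pq \<open>p \<noteq> q\<close> tk assms by auto
      qed
    qed
    then show "E n r s \<in> H" using rp by simp
  next
    have Dw: "dgp n (cj n w x) \<in> H"
      using DGP[OF HYP'[OF one_Bor, of "1\<^sub>m n"]] xc by simp
    have invt: "inv_into UNIV tau r = Transposition.transpose j k (inv_into UNIV w r)" if r: "r < n" for r
    proof -
      have "tau (Transposition.transpose j k (inv_into UNIV w r)) = r"
        unfolding tau_eq using permutes_inverses[OF w] by simp
      then show ?thesis using permutes_inverses[OF tp] by metis
    qed
    show "dgp n (cj n tau x) \<in> H"
    proof (cases "x $$ (j,j) = x $$ (k,k)")
      case True
      have "dgp n (cj n tau x) = dgp n (cj n w x)"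
      proof (rule eq_matI)
        fix r s assume "r < dim_row (dgp n (cj n w x))" "s < dim_col (dgp n (cj n w x))"
        then have rs: "r < n" "s < n" by auto
        show "dgp n (cj n tau x) $$ (r,s) = dgp n (cj n w x) $$ (r,s)"
          using rs invt[OF rs(1)] True by (auto simp: Transposition.transpose_def)
      qed auto
      then show ?thesis using Dw by simp
    next
      case False
      have "(j,k) \<in> Sset n x" using S_diag[OF xc _ _ False] assms by auto
      then have "(i,l) \<in> Sset n x" using S_closure[OF xc] assms by auto
      then have "E n (w i) (w l) \<in> H" using G assms by auto
      moreover have "w i < n" "w l < n" "w j < n" "w k < n" using assms permutes_in_image[OF w] by auto
      ultimately have "E n (w k) (w j) \<in> H" using closure[of "w i" "w l" "w k" "w j"] assms by auto
      then have hdH: "hd n (w j) (w k) \<in> H" using hd_in_H assms \<open>w k < n\<close> by auto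
      have "dgp n (cj n tau x) = dgp n (cj n w x) + (x $$ (k,k) - x $$ (j,j)) \<cdot>\<^sub>m hd n (w j) (w k)"
      proof (rule eq_matI)
        fix r s assume "r < dim_row (dgp n (cj n w x) + (x $$ (k,k) - x $$ (j,j)) \<cdot>\<^sub>m hd n (w j) (w k))"
          "s < dim_col (dgp n (cj n w x) + (x $$ (k,k) - x $$ (j,j)) \<cdot>\<^sub>m hd n (w j) (w k))"
        then have rs: "r < n" "s < n" by auto
        define p where "p = inv_into UNIV w r"
        have rp: "r = w p" unfolding p_def using permutes_inverses[OF w] by simp
        have wj: "(w p = w j) = (p = j)" "(w p = w k) = (p = k)" using permutes_inj[OF w] by (auto dest: injD)
        show "dgp n (cj n tau x) $$ (r,s) = (dgp n (cj n w x) + (x $$ (k,k) - x $$ (j,j)) \<cdot>\<^sub>m hd n (w j) (w k)) $$ (r,s)"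
          using rs invt[OF rs(1)] wj assms unfolding p_def[symmetric] rp
          by (auto simp: Transposition.transpose_def)
      qed auto
      then show ?thesis using H_add[OF Dw H_smult[OF hdH]] by simp
    qed
  qed
  fix dd assume dd: "dd \<in> dots n (\<lambda>m. if m = j then w k else if m = k then w j else w m)"
  fix di assume di: "di \<in> carrier_mat n n" "di * dd = 1\<^sub>m n"
  obtain c where c: "dd = c \<cdot>\<^sub>m perm_mat n tau" "dd \<in> SL n" using dd unfolding dots_def tau_def by auto
  have ddc: "dd \<in> carrier_mat n n" using c unfolding SL_def by auto
  have "c \<noteq> 0"
  proof
    assume "c = 0"
    then have "dd = 0\<^sub>m n n" using c by (intro eq_matI) auto
    then have "di * dd = 0\<^sub>m n n" using di(1) by simp
    then have "(1\<^sub>m n :: complex mat) = 0\<^sub>m n n" using di(2) by simp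
    then have "(1\<^sub>m n :: complex mat) $$ (0,0) = 0\<^sub>m n n $$ (0,0)" by simp
    then show False using n0 by simp
  qed
  define D' where "D' = (1/c) \<cdot>\<^sub>m perm_mat n (inv_into UNIV tau)"
  have D'c: "D' \<in> carrier_mat n n" unfolding D'_def by simp
  have "dd * D' = 1\<^sub>m n"
    unfolding c(1) D'_def using perm_inv[OF tp] \<open>c \<noteq> 0\<close>
    by (simp add: mult_smult_assoc_mat[of _ n n _ n] mult_smult_distrib[of _ n n _ n] smult_inv_cancel)
  then have "di * (dd * D') = di" using di(1) by simp
  then have diD: "di = D'" using cancel[where m=n, OF di(1) ddc D'c di(2)] by simp
  have ddi: "dd * di = 1\<^sub>m n" using mat_mult_left_right_inverse[OF di(1) ddc di(2)] .
  have "det di * det dd = 1" using det_mult[OF di(1) ddc] di(2) by simp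
  then have "det di = 1" using c unfolding SL_def by simp
  then have diSL: "di \<in> SL n" using di unfolding SL_def by simp
  have s1: "(c \<cdot>\<^sub>m perm_mat n tau) * x = c \<cdot>\<^sub>m (perm_mat n tau * x)"
    by (rule mult_smult_assoc_mat) (use xc in auto)
  have s2: "(c \<cdot>\<^sub>m (perm_mat n tau * x)) * ((1/c) \<cdot>\<^sub>m perm_mat n (inv_into UNIV tau))
      = (1/c) \<cdot>\<^sub>m ((c \<cdot>\<^sub>m (perm_mat n tau * x)) * perm_mat n (inv_into UNIV tau))"
    by (rule mult_smult_distrib) (use xc in auto)
  have s3: "(c \<cdot>\<^sub>m (perm_mat n tau * x)) * perm_mat n (inv_into UNIV tau)
      = c \<cdot>\<^sub>m (perm_mat n tau * x * perm_mat n (inv_into UNIV tau))"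
    by (rule mult_smult_assoc_mat) (use xc in auto)
  have "dd * x * di = perm_mat n tau * x * perm_mat n (inv_into UNIV tau)"
    unfolding c(1) diD D'_def s1 s2 s3 using \<open>c \<noteq> 0\<close> by (simp add: smult_inv_cancel)
  also have "\<dots> = cj n tau x" using perm_conj[OF tp xc] .
  finally have "dd * x * di \<in> H" using main by simp
  then show "coset n di \<in> hess_var n x H"
    unfolding hess_var_def using diSL ddc ddi by blast
qed


end
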